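(* Assume $2\mu\bar c>\sigma^2 r$. There is a constant $K>0$, independent of $n$ and $i$, such that for every $n\in\mathbb N$ the solution $v_0,\dots,v_n$ of the regime-switching system satisfies $0\le u_i\le K$ on $[0,\infty)$ for $i=1,\dots,n$, where $u_i=(v_i-v_{i-1})/\Delta c$.
   Context: Constants: $\mu\in\mathbb R$, $\sigma>0$, $r>0$, $\bar c\in(0,\mu]$, $b\in[0,1]$. Operators: $\mathcal L w=\tfrac12\sigma^2w''+\mu w'-rw$, $\mathcal T w=b(1-w')+(1-b)(1-w')^+$. Regime-switching system: for $n\in\mathbb N$ let $\Delta c=\bar c/n$, $c_i=\bar c-i\Delta c$ ($i=0,\dots,n$), $v_{-1}\equiv0$; find bounded functions $v_0,\dots,v_n$ on $[0,\infty)$, $v_i\in W^2_{p,\mathrm{loc}}([0,\infty))$ for all $p>1$, with $\min\{-\mathcal Lv_i-c_i\,\mathcal Tv_i,\ v_i-v_{i-1}\}=0$ a.e. on $(0,\infty)$ and $v_i(0)=0$, for $i=0,\dots,n$ (such a solution exists and is unique). *)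

theory Defs
  imports "HOL-Analysis.Analysis"
begin

text \<open>Operator T w = b(1-w') + (1-b)(1-w')^+, as a function of b and the value of w'.\<close>
definition opT :: "real \<Rightarrow> real \<Rightarrow> real" where
  "opT b p = b * (1 - p) + (1 - b) * max (1 - p) 0"

definition opL :: "real \<Rightarrow> real \<Rightarrow> real \<Rightarrow> real \<Rightarrow> real \<Rightarrow> real \<Rightarrow> real" where
  "opL \<mu> \<sigma> r w w' w'' = \<sigma>^2 / 2 * w'' + \<mu> * w' - r * w"

text \<open>v belongs to W^2_{p,loc}([0,\<infinity>)) for every p > 1, with (weak) derivatives v' and v'':
  v is differentiable on [0,\<infinity>) with derivative v', v' is the indefinite integral of v'',
  and v'' is p-integrable on every bounded interval [0,R] for every p > 1.\<close>
definition W2loc_all :: "(real \<Rightarrow> real) \<Rightarrow> (real \<Rightarrow> real) \<Rightarrow> (real \<Rightarrow> real) \<Rightarrow> bool" where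
  "W2loc_all v v' v'' \<longleftrightarrow>
     (\<forall>x\<ge>0. (v has_real_derivative v' x) (at x within {0..})) \<and>
     (\<forall>R\<ge>0. set_integrable lborel {0..R} v'' \<and>
        (\<forall>p>1. set_integrable lborel {0..R} (\<lambda>t. \<bar>v'' t\<bar> powr p))) \<and>
     (\<forall>x\<ge>0. v' x = v' 0 + (LBINT t:{0..x}. v'' t))"

text \<open>The regime-switching system for given n: v i for i = 0..n, with v_{-1} = 0,
  Delta c = cbar / n, c_i = cbar - i Delta c.\<close>
definition regime_solution ::
  "real \<Rightarrow> real \<Rightarrow> real \<Rightarrow> real \<Rightarrow> real \<Rightarrow> nat \<Rightarrow> (nat \<Rightarrow> real \<Rightarrow> real) \<Rightarrow> bool" where
  "regime_solution \<mu> \<sigma> r cbar b n v \<longleftrightarrow>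
     (\<forall>i\<le>n.
        (\<exists>B. \<forall>x\<ge>0. \<bar>v i x\<bar> \<le> B) \<and>
        v i 0 = 0 \<and>
        (\<exists>v' v''. W2loc_all (v i) v' v'' \<and>
           (AE x in lborel. x > 0 \<longrightarrow>
              min (- opL \<mu> \<sigma> r (v i x) (v' x) (v'' x)
                     - (cbar - real i * (cbar / real n)) * opT b (v' x))
                  (v i x - (if i = 0 then 0 else v (i - 1) x)) = 0)))"

end

theory Submission
  imports Defs
begin

definition AC :: "(real \<Rightarrow> real) \<Rightarrow> (real \<Rightarrow> real) \<Rightarrow> (real \<Rightarrow> real) \<Rightarrow> bool" where
  "AC v p g \<longleftrightarrow> (\<forall>x\<ge>0. (v has_real_derivative p x) (at x within {0..})) \<and>
     (\<forall>R\<ge>0. set_integrable lborel {0..R} g) \<and>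
     (\<forall>x\<ge>0. p x = p 0 + (LBINT t:{0..x}. g t))"

lemma W2_AC: "W2loc_all v p g \<Longrightarrow> AC v p g"
  unfolding W2loc_all_def AC_def by blast

lemma AC_p: "AC v p g \<Longrightarrow> x \<ge> 0 \<Longrightarrow> p x = p 0 + (LBINT t:{0..x}. g t)"
  unfolding AC_def by blast

lemma AC_int: "AC v p g \<Longrightarrow> R \<ge> 0 \<Longrightarrow> set_integrable lborel {0..R} g"
  unfolding AC_def by blast

lemma AC_d: "AC v p g \<Longrightarrow> x \<ge> 0 \<Longrightarrow> (v has_real_derivative p x) (at x within {0..})"
  unfolding AC_def by blast

lemma set_int_HK:
  fixes g :: "real \<Rightarrow> real"
  assumes "set_integrable lborel S g"
  shows "(g has_integral (LINT x:S|lborel. g x)) S"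
proof -
  have "((\<lambda>x. indicator S x *\<^sub>R g x) has_integral (LINT x:S|lborel. g x)) UNIV"
    using has_integral_integral_lborel[of "\<lambda>x. indicator S x *\<^sub>R g x"] assms
    unfolding set_integrable_def set_lebesgue_integral_def by simp
  moreover have "(\<lambda>x. indicator S x *\<^sub>R g x) = (\<lambda>x. if x \<in> S then g x else 0)"
    by (auto simp: indicator_def)
  ultimately have "((\<lambda>x. if x \<in> S then g x else 0) has_integral (LINT x:S|lborel. g x)) UNIV"
    by simp
  then show ?thesis by (simp only: has_integral_restrict_UNIV)
qed

lemma AC_deriv_at: assumes a: "AC v p g" "x > 0" shows "(v has_real_derivative p x) (at x)"
proof -
  have "interior {0::real..} = {0<..}" by (rule interior_Ici[of "-1"]) simp
  then have "at x within {0..} = at x" using a(2) by (intro at_within_interior) simp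
  then show ?thesis using AC_d[OF a(1), of x] a(2) by simp
qed

lemma AC_cont: assumes "AC v p g" shows "continuous_on {0..} v"
  by (rule DERIV_continuous_on[of _ _ p]) (rule AC_d[OF assms], simp)

lemma AC_pcont:
  assumes "AC v p g" "R \<ge> 0"
  shows "continuous_on {0..R} p"
proof -
  have I: "set_integrable lborel {0..R} g" using AC_int[OF assms(1)] assms by auto
  have gi: "g integrable_on {0..R}" using set_int_HK[OF I] unfolding integrable_on_def by blast
  have eq: "p x = p 0 + integral {0..x} g" if "x \<in> {0..R}" for x
  proof -
    have "set_integrable lborel {0..x} g"
      by (rule set_integrable_subset[OF I]) (use that in auto)
    then have "integral {0..x} g = (LBINT t:{0..x}. g t)"
      by (rule integral_unique[OF set_int_HK])
    then show ?thesis using AC_p[OF assms(1), of x] that by simp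
  qed
  have "continuous_on {0..R} (\<lambda>x. p 0 + integral {0..x} g)"
    by (rule continuous_on_add[OF continuous_on_const indefinite_integral_continuous_1[OF gi]])
  then show ?thesis by (rule continuous_on_eq) (rule eq[symmetric])
qed

lemma AC_incr:
  assumes "AC v p g" "0 \<le> x" "x \<le> y"
  shows "p y - p x = (LBINT t:{x<..y}. g t)" "set_integrable lborel {x<..y} g"
proof -
  have I: "set_integrable lborel {0..y} g" using AC_int[OF assms(1)] assms by auto
  have I1: "set_integrable lborel {0..x} g" by (rule set_integrable_subset[OF I]) (use assms in auto)
  show I2: "set_integrable lborel {x<..y} g" by (rule set_integrable_subset[OF I]) (use assms in auto)
  have U: "{0..y} = {0..x} \<union> {x<..y}" using assms by auto
  have "(LBINT t:{0..y}. g t) = (LBINT t:{0..x}. g t) + (LBINT t:{x<..y}. g t)"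
    unfolding U by (rule set_integral_Un[OF _ I1 I2]) auto
  then show "p y - p x = (LBINT t:{x<..y}. g t)"
  proof -
    have "p y = p 0 + (LBINT t:{0..y}. g t)" "p x = p 0 + (LBINT t:{0..x}. g t)"
      using AC_p[OF assms(1), of y] AC_p[OF assms(1), of x] assms(2,3) by auto
    with \<open>(LBINT t:{0..y}. g t) = _\<close> show ?thesis by simp
  qed
qed

lemma AC_incr_le:
  assumes "AC v p g" "0 \<le> x" "x \<le> y" "AE t in lborel. x < t \<and> t \<le> y \<longrightarrow> g t \<le> k"
  shows "p y - p x \<le> k * (y - x)"
proof -
  have "(LBINT t:{x<..y}. g t) \<le> (LBINT t:{x<..y}. k)"
    apply (rule set_integral_mono_AE)
    using AC_incr[OF assms(1-3)] assms(4) by (auto simp: set_integrable_def assms(3) intro!: integrable_real_indicator elim!: eventually_mono)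
  also have "\<dots> = k * (y - x)" using assms by (simp add: set_integral_const)
  finally show ?thesis using AC_incr[OF assms(1-3)] by simp
qed

lemma AC_incr_ge:
  assumes "AC v p g" "0 \<le> x" "x \<le> y" "AE t in lborel. x < t \<and> t \<le> y \<longrightarrow> g t \<ge> k"
  shows "p y - p x \<ge> k * (y - x)"
proof -
  have "(LBINT t:{x<..y}. k) \<le> (LBINT t:{x<..y}. g t)"
    apply (rule set_integral_mono_AE)
    using AC_incr[OF assms(1-3)] assms(4) by (auto simp: set_integrable_def assms(3) intro!: integrable_real_indicator elim!: eventually_mono)
  moreover have "(LBINT t:{x<..y}. k) = k * (y - x)" using assms by (simp add: set_integral_const)
  ultimately show ?thesis using AC_incr[OF assms(1-3)] by simp
qed


lemma MP:
  fixes z z' g :: "real \<Rightarrow> real"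
  assumes AC: "AC z z' g" and R: "R > 0" and s: "s > 0" and r: "r > 0" and C: "C \<ge> 0"
    and E: "E \<le> r * M" and z0: "z 0 \<le> M" and zR: "z R \<le> M"
    and ae: "AE x in lborel. 0 < x \<and> x < R \<and> z x > M \<longrightarrow> s * g x \<ge> r * z x - C * \<bar>z' x\<bar> - E"
  shows "\<forall>x\<in>{0..R}. z x \<le> M"
proof -
  have cz: "continuous_on {0..R} z"
    by (rule continuous_on_subset[OF AC_cont[OF AC]]) auto
  have cz': "continuous_on {0..R} z'" using AC_pcont[OF AC] R by simp
  obtain x0 where x0: "x0 \<in> {0..R}" "\<forall>y\<in>{0..R}. z y \<le> z x0"
    using continuous_attains_sup[OF compact_Icc _ cz] R by auto
  show ?thesis
  proof (cases "z x0 \<le> M")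
    case True then show ?thesis using x0 by force
  next
    case False
    then have zx0: "z x0 > M" by simp
    have "x0 \<noteq> 0" using zx0 z0 by auto
    moreover have "x0 \<noteq> R" using zx0 zR by auto
    ultimately have x0i: "0 < x0" "x0 < R" using x0(1) by auto
    have der: "(z has_real_derivative z' x0) (at x0)" using AC_deriv_at[OF AC x0i(1)] .
    have "z' x0 = 0"
    proof (rule DERIV_local_max[OF der])
      show "0 < min x0 (R - x0)" using x0i by simp
      show "\<forall>y. \<bar>x0 - y\<bar> < min x0 (R - x0) \<longrightarrow> z y \<le> z x0"
        using x0(2) by (auto simp: abs_if split: if_splits)
    qed
    define \<eta> where "\<eta> = (z x0 - M) / 2"
    have \<eta>: "\<eta> > 0" using zx0 by (simp add: \<eta>_def)
    define e2 where "e2 = r * \<eta> / (2 * (C + 1))"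
    have e2: "e2 > 0" using r \<eta> C by (simp add: e2_def)
    have Ce2: "C * e2 \<le> r * \<eta> / 2"
    proof -
      have "C * e2 = (r * \<eta> / 2) * (C / (C + 1))" using C by (simp add: e2_def field_simps)
      also have "\<dots> \<le> (r * \<eta> / 2) * 1"
        using C r \<eta> by (intro mult_left_mono) auto
      finally show ?thesis by simp
    qed
    obtain d1 where d1: "d1 > 0" "\<forall>y\<in>{0..R}. dist y x0 < d1 \<longrightarrow> dist (z y) (z x0) < \<eta>"
      using cz x0(1) \<eta> unfolding continuous_on_iff by blast
    obtain d2 where d2: "d2 > 0" "\<forall>y\<in>{0..R}. dist y x0 < d2 \<longrightarrow> dist (z' y) (z' x0) < e2"
      using cz' x0(1) e2 unfolding continuous_on_iff by blast
    define \<delta> where "\<delta> = min (min d1 d2) (R - x0) / 2"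
    have m: "min (min d1 d2) (R - x0) \<le> R - x0" "min (min d1 d2) (R - x0) \<le> d1"
       "min (min d1 d2) (R - x0) \<le> d2" "min (min d1 d2) (R - x0) > 0"
      using d1(1) d2(1) x0i by auto
    have \<delta>: "\<delta> > 0" "\<delta> < d1" "\<delta> < d2" "x0 + \<delta> < R"
      using m d1(1) d2(1) x0i unfolding \<delta>_def by linarith+
    define y1 where "y1 = x0 + \<delta>"
    have loc: "z t > M + \<eta> \<and> \<bar>z' t\<bar> < e2" if "x0 < t" "t \<le> y1" for t
    proof -
      have t: "t \<in> {0..R}" "dist t x0 < d1" "dist t x0 < d2"
        using that x0i \<delta> by (auto simp: y1_def dist_real_def)
      have "dist (z t) (z x0) < \<eta>" using d1(2) t by blast
      then have "\<bar>z t - z x0\<bar> < \<eta>" by (simp add: dist_real_def)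
      then have "z t > M + \<eta>" unfolding \<eta>_def abs_less_iff by (simp add: field_simps)
      moreover have "dist (z' t) (z' x0) < e2" using d2(2) t by blast
      ultimately show ?thesis using \<open>z' x0 = 0\<close> by (simp add: dist_real_def)
    qed
    define \<kappa> where "\<kappa> = r * \<eta> / (2 * s)"
    have \<kappa>: "\<kappa> > 0" using r \<eta> s by (simp add: \<kappa>_def)
    have aeg: "AE t in lborel. x0 < t \<and> t \<le> y1 \<longrightarrow> g t \<ge> \<kappa>"
      using ae
    proof (rule eventually_mono)
      fix t assume h: "0 < t \<and> t < R \<and> z t > M \<longrightarrow> s * g t \<ge> r * z t - C * \<bar>z' t\<bar> - E"
      show "x0 < t \<and> t \<le> y1 \<longrightarrow> g t \<ge> \<kappa>"
      proof
        assume t: "x0 < t \<and> t \<le> y1"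
        then have l: "z t > M + \<eta>" "\<bar>z' t\<bar> < e2" using loc by auto
        have "0 < t" "t < R" using t x0i \<delta> by (auto simp: y1_def)
        then have "s * g t \<ge> r * z t - C * \<bar>z' t\<bar> - E" using h l \<eta> by auto
        moreover have "r * z t \<ge> r * (M + \<eta>)" using l r by simp
        moreover have "C * \<bar>z' t\<bar> \<le> C * e2" using l C by (simp add: mult_left_mono)
        ultimately have "s * g t \<ge> r * \<eta> / 2" using Ce2 E by (simp add: algebra_simps)
        then show "g t \<ge> \<kappa>" using s by (simp add: \<kappa>_def field_simps)
      qed
    qed
    have zpos: "z' t > 0" if "x0 < t" "t \<le> y1" for t
    proof -
      have "z' t - z' x0 \<ge> \<kappa> * (t - x0)"
        apply (rule AC_incr_ge[OF AC])
        using that x0i apply simp_all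
        using aeg by (rule eventually_mono) auto
      moreover have "\<kappa> * (t - x0) > 0" using \<kappa> that by simp
      ultimately show ?thesis using \<open>z' x0 = 0\<close> by simp
    qed
    have "x0 < y1" using \<delta> by (simp add: y1_def)
    moreover have "continuous_on {x0..y1} z"
      by (rule continuous_on_subset[OF cz]) (use x0i \<delta> in \<open>auto simp: y1_def\<close>)
    moreover have "z differentiable (at x)" if "x0 < x" "x < y1" for x
      using AC_deriv_at[OF AC, of x] that x0i real_differentiable_def by force
    ultimately obtain l \<xi> where \<xi>: "x0 < \<xi>" "\<xi> < y1" "DERIV z \<xi> :> l" "z y1 - z x0 = (y1 - x0) * l"
      using MVT[of x0 y1 z] by blast
    have "l = z' \<xi>" using DERIV_unique[OF \<xi>(3) AC_deriv_at[OF AC]] \<xi> x0i by simp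
    then have "z y1 - z x0 > 0" using \<xi> zpos[of \<xi>] by simp
    moreover have "z y1 \<le> z x0" using x0(2) x0i \<delta> by (auto simp: y1_def)
    ultimately show ?thesis by simp
  qed
qed


lemma AC_diff:
  assumes "AC v1 p1 g1" "AC v2 p2 g2"
  shows "AC (\<lambda>x. v1 x - v2 x) (\<lambda>x. p1 x - p2 x) (\<lambda>x. g1 x - g2 x)"
  unfolding AC_def
proof (intro conjI allI impI)
  fix x :: real assume "x \<ge> 0"
  show "((\<lambda>x. v1 x - v2 x) has_real_derivative p1 x - p2 x) (at x within {0..})"
    using AC_d[OF assms(1) \<open>x\<ge>0\<close>] AC_d[OF assms(2) \<open>x\<ge>0\<close>] by (rule DERIV_diff)
next
  fix R :: real assume "R \<ge> 0"
  show "set_integrable lborel {0..R} (\<lambda>x. g1 x - g2 x)"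
    using AC_int[OF assms(1) \<open>R\<ge>0\<close>] AC_int[OF assms(2) \<open>R\<ge>0\<close>] by (rule set_integral_diff(1))
next
  fix x :: real assume "x \<ge> 0"
  have "(LBINT t:{0..x}. g1 t - g2 t) = (LBINT t:{0..x}. g1 t) - (LBINT t:{0..x}. g2 t)"
    using AC_int[OF assms(1) \<open>x\<ge>0\<close>] AC_int[OF assms(2) \<open>x\<ge>0\<close>] by (rule set_integral_diff(2))
  moreover have "p1 x = p1 0 + (LBINT t:{0..x}. g1 t)" "p2 x = p2 0 + (LBINT t:{0..x}. g2 t)"
    using AC_p[OF assms(1) \<open>x\<ge>0\<close>] AC_p[OF assms(2) \<open>x\<ge>0\<close>] by auto
  ultimately show "p1 x - p2 x = (p1 0 - p2 0) + (LBINT t:{0..x}. g1 t - g2 t)"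
    by linarith
qed

lemma set_integrable_const_Icc: "set_integrable lborel {a..b::real} (\<lambda>_. c::real)"
  unfolding set_integrable_def
  by (auto intro!: integrable_mult_left integrable_real_indicator simp: emeasure_lborel_Icc_eq)

lemma AC_poly:
  "AC (\<lambda>x. B + a * x + q * x^2) (\<lambda>x. a + 2 * q * x) (\<lambda>_. 2 * q)"
  unfolding AC_def
proof (intro conjI allI impI)
  fix x :: real assume "x \<ge> 0"
  show "((\<lambda>x. B + a * x + q * x^2) has_real_derivative a + 2 * q * x) (at x within {0..})"
    by (auto intro!: derivative_eq_intros)
next
  fix R :: real assume "R \<ge> 0"
  show "set_integrable lborel {0..R} (\<lambda>_. 2 * q)" by (rule set_integrable_const_Icc)
next
  fix x :: real assume "x \<ge> 0"
  have I: "(LBINT t:{0..x}. 2 * q) = 2 * q * x"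
    using \<open>x \<ge> 0\<close> by (simp add: set_integral_const)
  have "a + 2 * q * 0 = a" by simp
  then show "a + 2 * q * x = (a + 2 * q * 0) + (LBINT t:{0..x}. 2 * q)" using I by linarith
qed

lemma T_lip: "0 \<le> b \<Longrightarrow> b \<le> 1 \<Longrightarrow> \<bar>opT b p - opT b q\<bar> \<le> \<bar>p - q\<bar>"
proof -
  assume b: "0 \<le> b" "b \<le> 1"
  have "opT b p - opT b q = b * (q - p) + (1 - b) * (max (1 - p) 0 - max (1 - q) 0)"
    unfolding opT_def by (simp add: algebra_simps)
  moreover have "\<bar>max (1 - p) 0 - max (1 - q) 0\<bar> \<le> \<bar>p - q\<bar>" by (simp add: max_def abs_if)
  moreover have "\<bar>b * (q - p)\<bar> \<le> b * \<bar>p - q\<bar>" using b by (simp add: abs_mult abs_minus_commute)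
  moreover have "\<bar>(1 - b) * (max (1 - p) 0 - max (1 - q) 0)\<bar> \<le> (1 - b) * \<bar>p - q\<bar>"
    using b calculation(2) by (simp add: abs_mult mult_left_mono)
  ultimately have "\<bar>opT b p - opT b q\<bar> \<le> b * \<bar>p - q\<bar> + (1 - b) * \<bar>p - q\<bar>"
    by (smt (verit))
  then show ?thesis by (simp add: algebra_simps)
qed

lemma T_ge: "b \<le> 1 \<Longrightarrow> opT b p \<ge> 1 - p"
proof -
  assume b: "b \<le> 1"
  have "(1 - b) * max (1 - p) 0 \<ge> (1 - b) * (1 - p)" using b by (intro mult_left_mono) auto
  then show ?thesis unfolding opT_def by (simp add: algebra_simps)
qed

lemma T_le1: "0 \<le> b \<Longrightarrow> b \<le> 1 \<Longrightarrow> p \<ge> 0 \<Longrightarrow> opT b p \<le> 1"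
proof -
  assume b: "0 \<le> b" "b \<le> 1" "p \<ge> 0"
  have "max (1 - p) 0 \<le> 1" using b by simp
  then have "(1 - b) * max (1 - p) 0 \<le> (1 - b)" using b mult_left_mono[of _ 1 "1-b"] by simp
  moreover have "b * (1 - p) \<le> b" using b by (simp add: algebra_simps)
  ultimately show ?thesis unfolding opT_def by simp
qed

lemma cT_lip:
  assumes "0 \<le> b" "b \<le> 1" "0 \<le> c" "c \<le> cb"
  shows "c * opT b p \<le> c * opT b q + cb * \<bar>p - q\<bar>"
proof -
  have "c * (opT b p - opT b q) \<le> c * \<bar>p - q\<bar>"
    using T_lip[OF assms(1,2), of p q] assms(3) by (intro mult_left_mono) auto
  also have "\<dots> \<le> cb * \<bar>p - q\<bar>" using assms by (intro mult_right_mono) auto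
  finally show ?thesis by (simp add: algebra_simps)
qed

lemma cT_le:
  assumes "0 \<le> b" "b \<le> 1" "0 \<le> c" "c \<le> cb" "q \<ge> 0"
  shows "c * opT b q \<le> cb"
proof (cases "opT b q \<ge> 0")
  case True
  then have "c * opT b q \<le> cb * 1" using T_le1[OF assms(1,2,5)] assms by (intro mult_mono) auto
  then show ?thesis by simp
next
  case False
  then have "c * opT b q \<le> 0" using assms by (simp add: mult_nonneg_nonpos)
  then show ?thesis using assms by simp
qed

lemma ae_cont_nonneg:
  fixes f :: "real \<Rightarrow> real"
  assumes c: "continuous_on {0..} f" and ae: "AE x in lborel. 0 < x \<longrightarrow> f x \<ge> 0" and x: "x > 0"
  shows "f x \<ge> 0"
proof (rule ccontr)
  assume "\<not> f x \<ge> 0"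
  then have fx: "f x < 0" by simp
  obtain d where d: "d > 0" "\<forall>y\<in>{0..}. dist y x < d \<longrightarrow> dist (f y) (f x) < - f x"
    using c x fx unfolding continuous_on_iff by (metis atLeast_iff less_imp_le neg_0_less_iff_less)
  define d' where "d' = min d x"
  have d': "d' > 0" "d' \<le> d" "d' \<le> x" using d x by (auto simp: d'_def)
  have sub: "{x - d'<..<x + d'} \<subseteq> {y. \<not> (0 < y \<longrightarrow> f y \<ge> 0)}"
  proof
    fix y assume y: "y \<in> {x - d'<..<x + d'}"
    then have "y > 0" "dist y x < d" using d' by (auto simp: dist_real_def)
    then have "dist (f y) (f x) < - f x" using d(2) by auto
    then have "f y < 0" by (simp add: dist_real_def abs_less_iff)
    then show "y \<in> {y. \<not> (0 < y \<longrightarrow> f y \<ge> 0)}" using \<open>y > 0\<close> by simp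
  qed
  from ae obtain N where N: "{y \<in> space lborel. \<not> (0 < y \<longrightarrow> f y \<ge> 0)} \<subseteq> N" "emeasure lborel N = 0" "N \<in> sets lborel"
    by (rule AE_E)
  have "emeasure lborel {x - d'<..<x + d'} \<le> emeasure lborel N"
    using sub N(1,3) by (intro emeasure_mono) auto
  then have "emeasure lborel {x - d'<..<x + d'} = 0" using N(2) by simp
  moreover have "emeasure lborel {x - d'<..<x + d'} = ennreal (2 * d')" using d' by simp
  ultimately show False using d' by simp
qed



lemma eps_limit:
  fixes a b t dd :: real
  assumes h: "\<And>\<epsilon>. 0 < \<epsilon> \<Longrightarrow> \<epsilon> \<le> dd \<Longrightarrow> a \<le> b + \<epsilon> * t" and dd: "dd > 0" and t: "t \<ge> 0"
  shows "a \<le> b"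
proof (rule ccontr)
  assume "\<not> a \<le> b"
  then have ab: "a - b > 0" by simp
  define \<epsilon> where "\<epsilon> = min dd ((a - b) / (2 * (t + 1)))"
  have \<epsilon>: "\<epsilon> > 0" "\<epsilon> \<le> dd" "\<epsilon> \<le> (a - b) / (2 * (t + 1))" using ab dd t by (auto simp: \<epsilon>_def)
  have "\<epsilon> * t \<le> (a - b) / (2 * (t + 1)) * t" using \<epsilon> t by (intro mult_right_mono) auto
  also have "\<dots> < a - b"
  proof -
    have "(a - b) / (2 * (t + 1)) * t = (a - b) * (t / (2 * (t + 1)))" by simp
    also have "\<dots> < (a - b) * 1" using ab t by (intro mult_strict_left_mono) auto
    finally show ?thesis by simp
  qed
  finally have "b + \<epsilon> * t < a" by simp
  with h[OF \<epsilon>(1,2)] show False by simp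
qed


definition cc :: "real \<Rightarrow> nat \<Rightarrow> nat \<Rightarrow> real" where
  "cc cbar n i = cbar - real i * (cbar / real n)"

definition pv :: "(nat \<Rightarrow> real \<Rightarrow> real) \<Rightarrow> nat \<Rightarrow> real \<Rightarrow> real" where
  "pv v i x = (if i = 0 then 0 else v (i - 1) x)"

locale RS =
  fixes \<mu> \<sigma> r cbar b :: real and n :: nat and v P G :: "nat \<Rightarrow> real \<Rightarrow> real"
  assumes sig: "\<sigma> > 0" and rpos: "r > 0" and cpos: "0 < cbar" and cmu: "cbar \<le> \<mu>"
    and b0: "0 \<le> b" and b1: "b \<le> 1" and n1: "n \<ge> 1"
    and bnd: "\<And>i. i \<le> n \<Longrightarrow> \<exists>B. \<forall>x\<ge>0. \<bar>v i x\<bar> \<le> B"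
    and v0: "\<And>i. i \<le> n \<Longrightarrow> v i 0 = 0"
    and ac: "\<And>i. i \<le> n \<Longrightarrow> AC (v i) (P i) (G i)"
    and eq: "\<And>i. i \<le> n \<Longrightarrow> AE x in lborel. x > 0 \<longrightarrow>
       min (- opL \<mu> \<sigma> r (v i x) (P i x) (G i x) - cc cbar n i * opT b (P i x)) (v i x - pv v i x) = 0"
begin

abbreviation "c i \<equiv> cc cbar n i"
abbreviation "s \<equiv> \<sigma>^2 / 2"
abbreviation "Hm i x \<equiv> r * v i x - \<mu> * P i x - c i * opT b (P i x)"

lemma mupos: "\<mu> > 0" using cpos cmu by simp
lemma spos: "s > 0" using sig by simp

lemma c_bounds: "i \<le> n \<Longrightarrow> 0 \<le> c i \<and> c i \<le> cbar"
proof -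
  assume i: "i \<le> n"
  have n: "real n > 0" using n1 by simp
  have "real i * (cbar / real n) \<le> real n * (cbar / real n)"
    using i cpos n by (intro mult_right_mono) auto
  also have "\<dots> = cbar" using n by simp
  finally show ?thesis using cpos n unfolding cc_def by (simp add: zero_le_mult_iff)
qed

lemma c_step: "1 \<le> i \<Longrightarrow> c (i - 1) = c i + cbar / real n"
  unfolding cc_def by (simp add: of_nat_diff algebra_simps add_divide_distrib[symmetric] diff_divide_distrib[symmetric])

lemma sup_ae: assumes i: "i \<le> n" shows "AE x in lborel. x > 0 \<longrightarrow> s * G i x \<le> Hm i x"
  by (rule eventually_mono[OF eq[OF i]]) (auto simp: min_def opL_def split: if_splits)

lemma obst_ae: assumes i: "i \<le> n" shows "AE x in lborel. x > 0 \<longrightarrow> pv v i x \<le> v i x"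
  by (rule eventually_mono[OF eq[OF i]]) (auto simp: min_def split: if_splits)

lemma cont_ae: assumes i: "i \<le> n" shows "AE x in lborel. x > 0 \<and> v i x > pv v i x \<longrightarrow> s * G i x = Hm i x"
  by (rule eventually_mono[OF eq[OF i]]) (auto simp: min_def opL_def split: if_splits)

lemma mono_obst: assumes i: "i \<le> n" and x: "x \<ge> 0" shows "pv v i x \<le> v i x"
proof (cases "x = 0")
  case True then show ?thesis using v0[of i] v0[of "i-1"] i by (simp add: pv_def)
next
  case False
  then have xp: "x > 0" using x by simp
  have cv: "continuous_on {0..} (v i)" using AC_cont[OF ac[OF i]] .
  have cp: "continuous_on {0..} (pv v i)"
  proof (cases "i = 0")
    case True then show ?thesis by (simp add: pv_def)
  next
    case False
    then have "continuous_on {0..} (v (i - 1))" using AC_cont[OF ac] i by simp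
    then show ?thesis using False by (simp add: pv_def)
  qed
  have "continuous_on {0..} (\<lambda>x. v i x - pv v i x)" using cv cp by (intro continuous_on_diff)
  moreover have "AE x in lborel. 0 < x \<longrightarrow> v i x - pv v i x \<ge> 0"
    by (rule eventually_mono[OF obst_ae[OF i]]) auto
  ultimately have "v i x - pv v i x \<ge> 0" by (rule ae_cont_nonneg) (rule xp)
  then show ?thesis by simp
qed

lemma v_nonneg: "i \<le> n \<Longrightarrow> x \<ge> 0 \<Longrightarrow> v i x \<ge> 0"
proof (induction i)
  case 0 then show ?case using mono_obst[of 0 x] by (simp add: pv_def)
next
  case (Suc i) then show ?case using mono_obst[of "Suc i" x] by (simp add: pv_def)
qed


abbreviation "Bc \<equiv> (cbar + 1) / r"
abbreviation "CC \<equiv> \<mu> + cbar"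

lemma Bcpos: "Bc > 0" using cpos rpos by simp
lemma rBc: "r * Bc = cbar + 1" using rpos by simp

lemma pv_AC: assumes "i \<le> n" shows "AC (pv v i) (pv P i) (pv G i)"
proof (cases "i = 0")
  case True
  have "AC (\<lambda>x. 0 + 0 * x + 0 * x^2) (\<lambda>x. 0 + 2 * 0 * x) (\<lambda>_. 2 * 0)" by (rule AC_poly)
  then show ?thesis using True unfolding pv_def by simp
next
  case False then show ?thesis using ac[of "i - 1"] assms unfolding pv_def by simp
qed

lemma ub_step:
  assumes i: "i \<le> n" and IH: "\<And>y. y \<ge> 0 \<Longrightarrow> pv v i y \<le> Bc" and x: "x \<ge> 0"
  shows "v i x \<le> Bc"
proof (rule eps_limit[where dd = "1 / (2 * \<mu>)" and t = x])
  show "1 / (2 * \<mu>) > 0" using mupos by simp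
  show "x \<ge> 0" by fact
  fix \<epsilon> :: real assume \<epsilon>: "0 < \<epsilon>" "\<epsilon> \<le> 1 / (2 * \<mu>)"
  have me: "\<mu> * \<epsilon> \<le> 1/2" using \<epsilon> mupos by (simp add: field_simps)
  obtain Bi where Bi: "\<forall>y\<ge>0. \<bar>v i y\<bar> \<le> Bi" using bnd[OF i] by blast
  define R where "R = max (x + 1) ((\<bar>Bi\<bar> + 1) / \<epsilon>)"
  have R: "R > 0" "R \<ge> x" "\<epsilon> * R \<ge> \<bar>Bi\<bar> + 1"
  proof -
    show "R > 0" "R \<ge> x" using x by (auto simp: R_def)
    have "R \<ge> (\<bar>Bi\<bar> + 1) / \<epsilon>" by (simp add: R_def)
    then show "\<epsilon> * R \<ge> \<bar>Bi\<bar> + 1" using \<epsilon> by (simp add: field_simps)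
  qed
  define z where "z = (\<lambda>y. v i y - (Bc + \<epsilon> * y + 0 * y^2))"
  define z' where "z' = (\<lambda>y. P i y - (\<epsilon> + 2 * 0 * y))"
  define g where "g = (\<lambda>y. G i y - 2 * (0::real))"
  have AC: "AC z z' g" unfolding z_def z'_def g_def by (rule AC_diff[OF ac[OF i] AC_poly])
  have "\<forall>y\<in>{0..R}. z y \<le> 0"
  proof (rule MP[OF AC R(1) spos rpos, where C = CC and E = "-1/2"])
    show "CC \<ge> 0" using mupos cpos by simp
    show "- 1 / 2 \<le> r * 0" by simp
    show "z 0 \<le> 0" using v0[OF i] Bcpos by (simp add: z_def)
    have "\<bar>v i R\<bar> \<le> Bi" using Bi R(1) by simp
    then have "v i R \<le> \<bar>Bi\<bar>" by linarith
    then show "z R \<le> 0" using R(3) Bcpos by (simp add: z_def)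
    show "AE y in lborel. 0 < y \<and> y < R \<and> z y > 0 \<longrightarrow> s * g y \<ge> r * z y - CC * \<bar>z' y\<bar> - (-1/2)"
    proof (rule eventually_mono[OF cont_ae[OF i]])
      fix y assume h: "y > 0 \<and> v i y > pv v i y \<longrightarrow> s * G i y = Hm i y"
      show "0 < y \<and> y < R \<and> z y > 0 \<longrightarrow> s * g y \<ge> r * z y - CC * \<bar>z' y\<bar> - (-1/2)"
      proof
        assume y: "0 < y \<and> y < R \<and> z y > 0"
        then have "v i y > Bc + \<epsilon> * y" by (simp add: z_def)
        moreover have "\<epsilon> * y \<ge> 0" using \<epsilon> y by simp
        moreover have "pv v i y \<le> Bc" using IH y by simp
        ultimately have "v i y > pv v i y" by linarith
        then have sG: "s * G i y = Hm i y" using h y by simp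
        have cb: "0 \<le> c i" "c i \<le> cbar" using c_bounds[OF i] by auto
        have l1: "c i * opT b (P i y) \<le> c i * opT b \<epsilon> + cbar * \<bar>P i y - \<epsilon>\<bar>"
          by (rule cT_lip[OF b0 b1 cb])
        have l2: "c i * opT b \<epsilon> \<le> cbar" using cT_le[OF b0 b1 cb] \<epsilon> by simp
        have l3: "\<mu> * (P i y - \<epsilon>) \<le> \<mu> * \<bar>P i y - \<epsilon>\<bar>" using mupos by (intro mult_left_mono) auto
        have l4: "r * (\<epsilon> * y) \<ge> 0" using rpos \<epsilon> y by simp
        have "s * g y = Hm i y" using sG by (simp add: g_def)
        moreover have "r * z y = r * v i y - (cbar + 1) - r * (\<epsilon> * y)"
          using rBc by (simp add: z_def algebra_simps)
        moreover have "CC * \<bar>z' y\<bar> = \<mu> * \<bar>P i y - \<epsilon>\<bar> + cbar * \<bar>P i y - \<epsilon>\<bar>"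
          by (simp add: z'_def algebra_simps)
        ultimately show "s * g y \<ge> r * z y - CC * \<bar>z' y\<bar> - (-1/2)"
          using l1 l2 l3 l4 me by (simp add: algebra_simps)
      qed
    qed
  qed
  then have "z x \<le> 0" using R x by simp
  then show "v i x \<le> Bc + \<epsilon> * x" by (simp add: z_def)
qed

lemma ub: "i \<le> n \<Longrightarrow> x \<ge> 0 \<Longrightarrow> v i x \<le> Bc"
proof (induction i arbitrary: x)
  case 0
  show ?case by (rule ub_step) (use 0 Bcpos in \<open>auto simp: pv_def\<close>)
next
  case (Suc i)
  show ?case by (rule ub_step) (use Suc in \<open>auto simp: pv_def\<close>)
qed


definition "hh = \<sigma>^2 / (4 * \<mu>)"
definition "gam = max (Bc / hh^2) (2 * (cbar + 1) / \<sigma>^2)"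
definition "aa = 2 * gam * hh"
definition "L0 = max aa (Bc / hh)"

lemma hh_pos: "hh > 0" using sig mupos by (simp add: hh_def)
lemma gam_pos: "gam > 0" using sig cpos by (simp add: gam_def less_max_iff_disj)
lemma gam_ge: "gam * hh^2 \<ge> Bc" "\<sigma>^2 * gam / 2 \<ge> cbar + 1"
proof -
  have h2: "hh^2 > 0" using hh_pos by simp
  have "Bc / hh^2 \<le> gam" by (simp add: gam_def)
  then show "gam * hh^2 \<ge> Bc" by (simp only: pos_divide_le_eq[OF h2])
  have "gam \<ge> 2 * (cbar + 1) / \<sigma>^2" by (simp add: gam_def)
  then show "\<sigma>^2 * gam / 2 \<ge> cbar + 1" using sig by (simp add: field_simps)
qed
lemma mu_aa: "\<mu> * aa = \<sigma>^2 * gam / 2"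
  using mupos by (simp add: aa_def hh_def field_simps)

lemma near0_step:
  assumes i: "i \<le> n" and IH: "\<And>y. y \<in> {0..hh} \<Longrightarrow> pv v i y \<le> aa * y - gam * y^2"
  shows "\<forall>y\<in>{0..hh}. v i y \<le> aa * y - gam * y^2"
proof -
  define z where "z = (\<lambda>y. v i y - (0 + aa * y + (- gam) * y^2))"
  define z' where "z' = (\<lambda>y. P i y - (aa + 2 * (- gam) * y))"
  define g where "g = (\<lambda>y. G i y - 2 * (- gam))"
  have AC: "AC z z' g" unfolding z_def z'_def g_def by (rule AC_diff[OF ac[OF i] AC_poly])
  have "\<forall>y\<in>{0..hh}. z y \<le> 0"
  proof (rule MP[OF AC hh_pos spos rpos, where C = CC and E = "-1"])
    show "CC \<ge> 0" using mupos cpos by simp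
    show "- 1 \<le> r * 0" by simp
    show "z 0 \<le> 0" using v0[OF i] by (simp add: z_def)
    have "v i hh \<le> Bc" using ub[OF i] hh_pos by simp
    moreover have "aa * hh = 2 * (gam * hh^2)" by (simp add: aa_def power2_eq_square)
    ultimately show "z hh \<le> 0" using gam_ge(1) by (simp add: z_def)
    show "AE y in lborel. 0 < y \<and> y < hh \<and> z y > 0 \<longrightarrow> s * g y \<ge> r * z y - CC * \<bar>z' y\<bar> - (-1)"
    proof (rule eventually_mono[OF cont_ae[OF i]])
      fix y assume h: "y > 0 \<and> v i y > pv v i y \<longrightarrow> s * G i y = Hm i y"
      show "0 < y \<and> y < hh \<and> z y > 0 \<longrightarrow> s * g y \<ge> r * z y - CC * \<bar>z' y\<bar> - (-1)"
      proof
        assume y: "0 < y \<and> y < hh \<and> z y > 0"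
        then have "v i y > aa * y - gam * y^2" by (simp add: z_def)
        moreover have "pv v i y \<le> aa * y - gam * y^2" using IH y by simp
        ultimately have "v i y > pv v i y" by linarith
        then have sG: "s * G i y = Hm i y" using h y by simp
        define q where "q = aa - 2 * gam * y"
        have gy: "gam * y \<le> gam * hh" using gam_pos y by (intro mult_left_mono) auto
        have q: "0 \<le> q" "q \<le> aa" using gy gam_pos y by (auto simp: q_def aa_def)
        have psi: "aa * y - gam * y^2 \<ge> 0"
        proof -
          have "aa * y - gam * y^2 = y * (aa - gam * y)" by (simp add: algebra_simps power2_eq_square)
          moreover have "aa - gam * y \<ge> 0" using gy gam_pos hh_pos by (simp add: aa_def)
          ultimately show ?thesis using y by simp
        qed
        have cb: "0 \<le> c i" "c i \<le> cbar" using c_bounds[OF i] by auto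
        have l1: "c i * opT b (P i y) \<le> c i * opT b q + cbar * \<bar>P i y - q\<bar>"
          by (rule cT_lip[OF b0 b1 cb])
        have l2: "c i * opT b q \<le> cbar" using cT_le[OF b0 b1 cb q(1)] .
        have l3: "\<mu> * (P i y - q) \<le> \<mu> * \<bar>P i y - q\<bar>" using mupos by (intro mult_left_mono) auto
        have l4: "\<mu> * q \<le> \<mu> * aa" using mupos q by (intro mult_left_mono) auto
        have l6: "r * (aa * y - gam * y^2) \<ge> 0" using rpos psi by simp
        have "s * g y = Hm i y + \<sigma>^2 * gam" using sG by (simp add: g_def algebra_simps)
        moreover have "r * z y = r * v i y - r * (aa * y - gam * y^2)"
          by (simp add: z_def algebra_simps)
        moreover have "CC * \<bar>z' y\<bar> = \<mu> * \<bar>P i y - q\<bar> + cbar * \<bar>P i y - q\<bar>"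
          by (simp add: z'_def q_def algebra_simps)
        ultimately show "s * g y \<ge> r * z y - CC * \<bar>z' y\<bar> - (-1)"
          using l1 l2 l3 l4 l6 mu_aa gam_ge(2) by (simp add: algebra_simps)
      qed
    qed
  qed
  then show ?thesis by (simp add: z_def)
qed

lemma near0: "i \<le> n \<Longrightarrow> \<forall>y\<in>{0..hh}. v i y \<le> aa * y - gam * y^2"
proof (induction i)
  case 0
  show ?case
  proof (rule near0_step[OF 0])
    fix y assume y: "y \<in> {0..hh}"
    have gy: "gam * y \<le> gam * hh" using gam_pos y by (intro mult_left_mono) auto
    have "aa * y - gam * y^2 = y * (aa - gam * y)" by (simp add: algebra_simps power2_eq_square)
    moreover have "aa - gam * y \<ge> 0" using gy gam_pos hh_pos by (simp add: aa_def)
    ultimately show "pv v 0 y \<le> aa * y - gam * y^2" using y by (simp add: pv_def)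
  qed
next
  case (Suc i)
  show ?case by (rule near0_step[OF Suc(2)]) (use Suc in \<open>auto simp: pv_def\<close>)
qed

lemma lin_bound: assumes i: "i \<le> n" and y: "y \<ge> 0" shows "v i y \<le> L0 * y"
proof (cases "y \<le> hh")
  case True
  then have "v i y \<le> aa * y - gam * y^2" using near0[OF i] y by simp
  also have "\<dots> \<le> aa * y" using gam_pos by simp
  also have "\<dots> \<le> L0 * y" using y by (intro mult_right_mono) (auto simp: L0_def)
  finally show ?thesis .
next
  case False
  have "v i y \<le> Bc" using ub[OF i y] .
  also have "\<dots> = (Bc / hh) * hh" using hh_pos by simp
  also have "\<dots> \<le> (Bc / hh) * y" using False Bcpos hh_pos rpos cpos by (intro mult_left_mono) auto
  also have "\<dots> \<le> L0 * y" using y by (intro mult_right_mono) (auto simp: L0_def)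
  finally show ?thesis .
qed


definition "kk = 2 * r * Bc / \<sigma>^2"
definition "DD = max 1 (max (2 * L0) (2 * kk * Bc + 1))"

lemma kk_pos: "kk > 0" using rpos cpos sig by (simp add: kk_def)

lemma G_le_k: assumes i: "i \<le> n" shows "AE y in lborel. y > 0 \<and> P i y \<ge> 0 \<longrightarrow> G i y \<le> kk"
proof (rule eventually_mono[OF sup_ae[OF i]])
  fix y assume h: "y > 0 \<longrightarrow> s * G i y \<le> Hm i y"
  show "y > 0 \<and> P i y \<ge> 0 \<longrightarrow> G i y \<le> kk"
  proof
    assume y: "y > 0 \<and> P i y \<ge> 0"
    have cb: "0 \<le> c i" "c i \<le> cbar" using c_bounds[OF i] by auto
    have "c i * opT b (P i y) \<ge> c i * (1 - P i y)" using T_ge[OF b1] cb by (intro mult_left_mono) auto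
    then have f1: "c i * opT b (P i y) \<ge> c i - c i * P i y" by (simp add: algebra_simps)
    have f2: "c i * P i y \<le> \<mu> * P i y" using cb cmu y by (intro mult_right_mono) auto
    have f3: "r * v i y \<le> r * Bc" by (rule mult_left_mono[OF ub[OF i]]) (use y rpos in auto)
    have f4: "s * G i y \<le> r * v i y - \<mu> * P i y - c i * opT b (P i y)" using h y by simp
    have "s * G i y \<le> r * Bc" using f1 f2 f3 f4 cb by linarith
    then have "G i y * s \<le> r * Bc" by (simp add: mult.commute)
    then have "G i y \<le> r * Bc / s" by (simp only: pos_le_divide_eq[OF spos])
    moreover have "r * Bc / s = kk" unfolding kk_def using sig by (simp add: field_simps)
    ultimately show "G i y \<le> kk" by simp
  qed
qed

lemma dbound: assumes i: "i \<le> n" and x: "x > 0" shows "P i x \<le> DD"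
proof (rule ccontr)
  assume "\<not> P i x \<le> DD"
  then have PD: "P i x > DD" by simp
  define Pv where "Pv = P i x"
  have Pv1: "Pv > 1" using PD by (simp add: Pv_def DD_def)
  define l where "l = (Pv - 1) / kk"
  have l: "l > 0" "kk * l = Pv - 1" using Pv1 kk_pos by (auto simp: l_def)
  define y1 where "y1 = max 0 (x - l)"
  have y1: "0 \<le> y1" "y1 \<le> x" "x - y1 \<le> l" using x l by (auto simp: y1_def)
  have AC: "AC (v i) (P i) (G i)" using ac[OF i] .
  have cP: "continuous_on {y1..x} (P i)"
    by (rule continuous_on_subset[OF AC_pcont[OF AC, of x]]) (use x y1 in auto)
  have Gk: "AE t in lborel. y < t \<and> t \<le> x \<longrightarrow> G i t \<le> kk"
    if "y \<ge> y1" "\<And>t. y < t \<Longrightarrow> t \<le> x \<Longrightarrow> P i t > 1/2" for y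
  proof (rule eventually_mono[OF G_le_k[OF i]])
    fix t assume "t > 0 \<and> P i t \<ge> 0 \<longrightarrow> G i t \<le> kk"
    then show "y < t \<and> t \<le> x \<longrightarrow> G i t \<le> kk" using that y1 by force
  qed
  have half: "\<forall>y\<in>{y1..x}. P i y > 1/2"
  proof (rule ccontr)
    assume neg: "\<not> (\<forall>y\<in>{y1..x}. P i y > 1/2)"
    define S where "S = {y1..x} \<inter> P i -` {..1/2}"
    have Sne: "S \<noteq> {}" using neg by (auto simp: S_def not_less)
    have Scl: "closed S" unfolding S_def by (rule continuous_closed_preimage[OF cP]) auto
    have Sbd: "bdd_above S" unfolding S_def by (rule bdd_aboveI[of _ x]) auto
    define s0 where "s0 = Sup S"
    have s0S: "s0 \<in> S" unfolding s0_def by (rule closed_contains_Sup[OF Sne Sbd Scl])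
    then have s0: "y1 \<le> s0" "s0 \<le> x" "P i s0 \<le> 1/2" by (auto simp: S_def)
    have "s0 \<noteq> x" using s0(3) Pv1 by (auto simp: Pv_def)
    then have s0x: "s0 < x" using s0 by simp
    have after: "P i t > 1/2" if "s0 < t" "t \<le> x" for t
    proof (rule ccontr)
      assume "\<not> P i t > 1/2"
      then have "t \<in> S" using that s0 by (auto simp: S_def)
      then have "t \<le> s0" unfolding s0_def by (rule cSup_upper[OF _ Sbd])
      then show False using that by simp
    qed
    have "P i x - P i s0 \<le> kk * (x - s0)"
      by (rule AC_incr_le[OF AC _ _ Gk]) (use s0 y1 after in auto)
    moreover have "kk * (x - s0) \<le> kk * l" using kk_pos s0 y1 by (intro mult_left_mono) auto
    ultimately have "P i s0 \<ge> 1" using l by (simp add: Pv_def)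
    then show False using s0 by simp
  qed
  have lowb: "P i y \<ge> Pv - kk * (x - y)" if "y \<in> {y1..x}" for y
  proof -
    have "P i x - P i y \<le> kk * (x - y)"
      by (rule AC_incr_le[OF AC _ _ Gk]) (use that y1 half in auto)
    then show ?thesis by (simp add: Pv_def)
  qed
  define \<phi> where "\<phi> = (\<lambda>y. v i y - Pv * y - kk * (x - y)^2 / 2)"
  have "\<phi> y1 \<le> \<phi> x"
  proof (rule DERIV_nonneg_imp_increasing_open[OF y1(2)])
    fix y assume y: "y1 < y" "y < x"
    have d: "(v i has_real_derivative P i y) (at y)" using AC_deriv_at[OF AC] y y1 by simp
    have "(\<phi> has_real_derivative (P i y - Pv - kk * (2 * (x - y) * (0 - 1)) / 2)) (at y)"
      using d unfolding \<phi>_def by (auto intro!: derivative_eq_intros)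
    moreover have "P i y - Pv - kk * (2 * (x - y) * (0 - 1)) / 2 \<ge> 0"
    proof -
      have "kk * (2 * (x - y) * (0 - 1)) / 2 = - (kk * (x - y))" by (simp add: field_simps)
      then show ?thesis using lowb[of y] y by simp
    qed
    ultimately show "\<exists>y'. (\<phi> has_real_derivative y') (at y) \<and> y' \<ge> 0" by blast
  next
    have "continuous_on {y1..x} (v i)"
      by (rule continuous_on_subset[OF AC_cont[OF AC]]) (use y1 in auto)
    then show "continuous_on {y1..x} \<phi>" unfolding \<phi>_def by (intro continuous_intros) auto
  qed
  then have main: "v i x - v i y1 \<ge> Pv * (x - y1) - kk * (x - y1)^2 / 2"
    by (simp add: \<phi>_def algebra_simps)
  define d where "d = x - y1"
  have d: "0 \<le> d" "d \<le> l" using y1 by (auto simp: d_def)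
  have "kk * d^2 \<le> (Pv - 1) * d"
  proof -
    have "kk * d \<le> kk * l" using d kk_pos by (intro mult_left_mono) auto
    then have "kk * d * d \<le> (Pv - 1) * d" using l d by (intro mult_right_mono) auto
    then show ?thesis by (simp add: power2_eq_square algebra_simps)
  qed
  then have kd: "kk * d^2 \<le> Pv * d - d" by (simp add: algebra_simps)
  have m1: "v i x - v i y1 \<ge> Pv * d - kk * d^2 / 2" using main by (simp add: d_def)
  have main2: "v i x - v i y1 \<ge> d * (Pv + 1) / 2"
  proof -
    obtain A Q where AQ: "A = Pv * d" "Q = kk * d^2" by blast
    have e: "d * (Pv + 1) / 2 = (A + d) / 2" using AQ by (simp add: algebra_simps)
    have "A - Q / 2 \<le> v i x - v i y1" "Q \<le> A - d" using m1 kd AQ by auto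
    then show ?thesis unfolding e by (simp add: field_simps)
  qed
  show False
  proof (cases "x \<le> l")
    case True
    then have "y1 = 0" by (simp add: y1_def)
    then have "v i x \<ge> x * (Pv + 1) / 2" using main2 v0[OF i] by (simp add: d_def)
    moreover have "v i x \<le> L0 * x" using lin_bound[OF i] x by simp
    ultimately have "x * ((Pv + 1) / 2) \<le> x * L0" by (simp add: algebra_simps)
    then have "(Pv + 1) / 2 \<le> L0" using x by simp
    then show False using PD by (simp add: Pv_def DD_def)
  next
    case False
    then have "y1 = x - l" by (simp add: y1_def)
    then have "d = l" by (simp add: d_def)
    moreover have "v i x - v i y1 \<le> Bc" using ub[OF i, of x] v_nonneg[OF i y1(1)] x by simp
    ultimately have "l * (Pv + 1) / 2 \<le> Bc" using main2 by (metis order_trans)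
    then have "l * (Pv + 1) \<le> 2 * Bc" using rpos by (simp add: field_simps)
    then have "kk * (l * (Pv + 1)) \<le> kk * (2 * Bc)" using kk_pos by (intro mult_left_mono) auto
    then have "kk * l * (Pv + 1) \<le> kk * (2 * Bc)" by (simp only: mult.assoc)
    then have "(Pv - 1) * (Pv + 1) \<le> kk * (2 * Bc)" by (simp only: l(2))
    moreover have "(Pv - 1) * (Pv + 1) = Pv * Pv - 1" by (simp add: algebra_simps)
    moreover have "kk * (2 * Bc) = 2 * kk * Bc" by simp
    ultimately have "Pv * Pv \<le> 2 * kk * Bc + 1" by (smt (verit))
    moreover have "Pv \<le> Pv * Pv" using Pv1 by simp
    moreover have "2 * kk * Bc + 1 \<le> DD" unfolding DD_def by (rule max.coboundedI2, rule max.cobounded2)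
    ultimately have "Pv \<le> DD" by (smt (verit))
    then show False using PD by (simp add: Pv_def)
  qed
qed


lemma main_bound:
  assumes i1: "1 \<le> i" and i: "i \<le> n" and x: "x \<ge> 0"
  shows "v i x - v (i - 1) x \<le> (cbar / real n) * DD / r"
proof -
  define \<Delta> where "\<Delta> = cbar / real n"
  have \<Delta>: "\<Delta> > 0" using cpos n1 by (simp add: \<Delta>_def)
  have i': "i - 1 \<le> n" using i by simp
  have DD1: "DD \<ge> 1" by (simp add: DD_def)
  have CCp: "CC \<ge> 0" using mupos cpos by simp
  have epsb: "v i x - v (i - 1) x \<le> \<Delta> * DD / r + \<epsilon> * (CC / r + x)" if \<epsilon>: "0 < \<epsilon>" "\<epsilon> \<le> 1" for \<epsilon>
  proof -
    define M where "M = (\<Delta> * DD + CC * \<epsilon>) / r"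
    have M0: "M \<ge> 0" using \<Delta> DD1 CCp \<epsilon> rpos by (simp add: M_def)
    define R where "R = max (x + 1) (Bc / \<epsilon>)"
    have R: "R > 0" "R \<ge> x" "\<epsilon> * R \<ge> Bc"
    proof -
      show "R > 0" "R \<ge> x" using x by (auto simp: R_def)
      have "Bc / \<epsilon> \<le> R" by (simp add: R_def)
      then have "Bc \<le> R * \<epsilon>" by (simp only: pos_divide_le_eq[OF \<epsilon>(1)])
      then show "\<epsilon> * R \<ge> Bc" by (simp only: mult.commute)
    qed
    define z where "z = (\<lambda>y. (v i y - v (i - 1) y) - (0 + \<epsilon> * y + 0 * y^2))"
    define z' where "z' = (\<lambda>y. (P i y - P (i - 1) y) - (\<epsilon> + 2 * 0 * y))"
    define g where "g = (\<lambda>y. (G i y - G (i - 1) y) - 2 * (0::real))"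
    have AC: "AC z z' g" unfolding z_def z'_def g_def
      by (rule AC_diff[OF AC_diff[OF ac[OF i] ac[OF i']] AC_poly])
    have "\<forall>y\<in>{0..R}. z y \<le> M"
    proof (rule MP[OF AC R(1) spos rpos, where C = CC and E = "\<Delta> * DD + CC * \<epsilon>"])
      show "CC \<ge> 0" by (rule CCp)
      show "\<Delta> * DD + CC * \<epsilon> \<le> r * M" using rpos by (simp add: M_def)
      show "z 0 \<le> M" using v0[OF i] v0[OF i'] M0 by (simp add: z_def)
      have "v i R \<le> Bc" using ub[OF i] R by simp
      moreover have "v (i - 1) R \<ge> 0" using v_nonneg[OF i'] R by simp
      ultimately show "z R \<le> M" using R(3) M0 by (simp add: z_def)
      show "AE y in lborel. 0 < y \<and> y < R \<and> z y > M \<longrightarrow>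
          s * g y \<ge> r * z y - CC * \<bar>z' y\<bar> - (\<Delta> * DD + CC * \<epsilon>)"
      proof (rule eventually_mono[OF eventually_conj[OF cont_ae[OF i] sup_ae[OF i']]])
        fix y assume h: "(y > 0 \<and> v i y > pv v i y \<longrightarrow> s * G i y = Hm i y) \<and>
                         (y > 0 \<longrightarrow> s * G (i - 1) y \<le> Hm (i - 1) y)"
        show "0 < y \<and> y < R \<and> z y > M \<longrightarrow> s * g y \<ge> r * z y - CC * \<bar>z' y\<bar> - (\<Delta> * DD + CC * \<epsilon>)"
        proof
          assume y: "0 < y \<and> y < R \<and> z y > M"
          have "\<epsilon> * y \<ge> 0" using \<epsilon> y by simp
          then have "v i y > v (i - 1) y" using y M0 by (simp add: z_def)
          then have "v i y > pv v i y" using i1 by (simp add: pv_def)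
          then have sG1: "s * G i y = Hm i y" using h y by simp
          have sG2: "s * G (i - 1) y \<le> Hm (i - 1) y" using h y by simp
          have cb: "0 \<le> c i" "c i \<le> cbar" using c_bounds[OF i] by auto
          define p1 where "p1 = P i y"
          define p0 where "p0 = P (i - 1) y"
          have cs: "c (i - 1) = c i + \<Delta>" using c_step[OF i1] by (simp add: \<Delta>_def)
          have f1: "c i * opT b p1 \<le> c i * opT b p0 + cbar * \<bar>p1 - p0\<bar>"
            by (rule cT_lip[OF b0 b1 cb])
          have p0D: "p0 \<le> DD" using dbound[OF i' ] y by (simp add: p0_def)
          have "opT b p0 \<ge> - DD" using T_ge[OF b1, of p0] p0D by simp
          then have f2: "\<Delta> * opT b p0 \<ge> \<Delta> * (- DD)" using \<Delta> by (intro mult_left_mono) auto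
          have f3: "c (i - 1) * opT b p0 = c i * opT b p0 + \<Delta> * opT b p0"
            using cs by (simp add: algebra_simps)
          have f4: "\<mu> * (p1 - p0) \<le> \<mu> * \<bar>p1 - p0\<bar>" using mupos by (intro mult_left_mono) auto
          have zy: "z' y = (p1 - p0) - \<epsilon>" by (simp add: z'_def p1_def p0_def)
          have "\<bar>p1 - p0\<bar> \<le> \<bar>z' y\<bar> + \<epsilon>" using zy \<epsilon> by linarith
          then have "CC * \<bar>p1 - p0\<bar> \<le> CC * (\<bar>z' y\<bar> + \<epsilon>)"
            using CCp by (rule mult_left_mono)
          then have f5: "CC * \<bar>p1 - p0\<bar> \<le> CC * \<bar>z' y\<bar> + CC * \<epsilon>"
            by (simp only: distrib_left)
          have f6: "CC * \<bar>p1 - p0\<bar> = \<mu> * \<bar>p1 - p0\<bar> + cbar * \<bar>p1 - p0\<bar>"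
            by (simp add: algebra_simps)
          have f7: "r * z y = r * v i y - r * v (i - 1) y - r * (\<epsilon> * y)"
            by (simp add: z_def algebra_simps)
          have f8: "r * (\<epsilon> * y) \<ge> 0" using rpos \<epsilon> y by simp
          have f9: "s * g y = s * G i y - s * G (i - 1) y" by (simp add: g_def algebra_simps)
          have f10: "\<mu> * (p1 - p0) = \<mu> * p1 - \<mu> * p0" by (simp add: algebra_simps)
          have f11: "\<Delta> * (- DD) = - (\<Delta> * DD)" by simp
          have S1: "s * g y \<ge> Hm i y - Hm (i - 1) y" using sG1 sG2 f9 by linarith
          have S2: "Hm i y - Hm (i - 1) y \<ge> r * v i y - r * v (i - 1) y - CC * \<bar>p1 - p0\<bar> - \<Delta> * DD"
            using f1 f2 f3 f4 f6 f10 f11 unfolding p1_def[symmetric] p0_def[symmetric] by linarith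
          show "s * g y \<ge> r * z y - CC * \<bar>z' y\<bar> - (\<Delta> * DD + CC * \<epsilon>)"
            using S1 S2 f5 f7 f8 by linarith
        qed
      qed
    qed
    then have "z x \<le> M" using R x by simp
    then have "v i x - v (i - 1) x \<le> M + \<epsilon> * x" by (simp add: z_def)
    moreover have "M + \<epsilon> * x = \<Delta> * DD / r + \<epsilon> * (CC / r + x)"
      using rpos by (simp add: M_def field_simps)
    ultimately show ?thesis by simp
  qed
  have tpos: "CC / r + x \<ge> 0" using x rpos CCp by simp
  have "v i x - v (i - 1) x \<le> \<Delta> * DD / r"
    by (rule eps_limit[OF epsb zero_less_one tpos])
  then show ?thesis by (simp add: \<Delta>_def)
qed

end

theorem lemma5p10:
  fixes \<mu> \<sigma> r cbar b :: real
  assumes "\<sigma> > 0" and "r > 0" and "0 < cbar" and "cbar \<le> \<mu>" and "0 \<le> b" and "b \<le> 1"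
    and "2 * \<mu> * cbar > \<sigma>^2 * r"
  shows "\<exists>K>0. \<forall>n::nat. \<forall>v. n \<ge> 1 \<longrightarrow> regime_solution \<mu> \<sigma> r cbar b n v \<longrightarrow>
           (\<forall>i\<in>{1..n}. \<forall>x\<ge>0.
              0 \<le> (v i x - v (i - 1) x) / (cbar / real n) \<and>
              (v i x - v (i - 1) x) / (cbar / real n) \<le> K)"
proof -
  define Kc where "Kc = max 1 (RS.DD \<mu> \<sigma> r cbar) / r"
  have Kpos: "Kc > 0" using assms(2) unfolding Kc_def by (intro divide_pos_pos) auto
  show ?thesis
  proof (intro exI[of _ Kc] conjI allI impI ballI)
    show "Kc > 0" by (rule Kpos)
    fix n :: nat and v :: "nat \<Rightarrow> real \<Rightarrow> real" and i :: nat and x :: real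
    assume n1: "n \<ge> 1" and rs: "regime_solution \<mu> \<sigma> r cbar b n v" and i: "i \<in> {1..n}" and x: "x \<ge> 0"
    define Q where "Q j p g \<longleftrightarrow> W2loc_all (v j) p g \<and>
           (AE x in lborel. x > 0 \<longrightarrow>
              min (- opL \<mu> \<sigma> r (v j x) (p x) (g x)
                     - (cbar - real j * (cbar / real n)) * opT b (p x))
                  (v j x - (if j = 0 then 0 else v (j - 1) x)) = 0)" for j p g
    have "\<forall>j\<in>{..n}. \<exists>p g. Q j p g" using rs unfolding regime_solution_def Q_def by auto
    then have "\<forall>j\<in>{..n}. \<exists>pg. Q j (fst pg) (snd pg)" by auto
    then obtain F where F: "\<forall>j\<in>{..n}. Q j (fst (F j)) (snd (F j))" by (rule bchoice[THEN exE])
    define P where "P j = fst (F j)" for j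
    define G where "G j = snd (F j)" for j
    have PG: "Q j (P j) (G j)" if "j \<le> n" for j using F that by (simp add: P_def G_def)
    interpret RS \<mu> \<sigma> r cbar b n v P G
    proof
      show "\<sigma> > 0" "r > 0" "0 < cbar" "cbar \<le> \<mu>" "0 \<le> b" "b \<le> 1" "n \<ge> 1" using assms n1 by auto
      fix j assume j: "j \<le> n"
      show "\<exists>B. \<forall>x\<ge>0. \<bar>v j x\<bar> \<le> B" using rs j unfolding regime_solution_def by blast
      show "v j 0 = 0" using rs j unfolding regime_solution_def by blast
      show "AC (v j) (P j) (G j)" using PG[OF j] W2_AC unfolding Q_def by blast
      show "AE x in lborel. x > 0 \<longrightarrow>
       min (- opL \<mu> \<sigma> r (v j x) (P j x) (G j x) - cc cbar n j * opT b (P j x)) (v j x - pv v j x) = 0"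
        using PG[OF j] unfolding cc_def pv_def Q_def by blast
    qed
    have i1: "1 \<le> i" "i \<le> n" using i by auto
    have \<Delta>: "cbar / real n > 0" using assms(3) n1 by simp
    have lo: "v (i - 1) x \<le> v i x" using mono_obst[OF i1(2) x] i1(1) by (simp add: pv_def)
    have up: "v i x - v (i - 1) x \<le> (cbar / real n) * DD / r" by (rule main_bound[OF i1 x])
    show "0 \<le> (v i x - v (i - 1) x) / (cbar / real n)" using lo \<Delta> by (intro divide_nonneg_pos) auto
    have "(v i x - v (i - 1) x) / (cbar / real n) \<le> ((cbar / real n) * DD / r) / (cbar / real n)"
      by (rule divide_right_mono[OF up]) (use \<Delta> in simp)
    also have "\<dots> = DD / r" using assms(3) n1 by simp
    also have "\<dots> \<le> Kc" unfolding Kc_def using assms(2) by (intro divide_right_mono) auto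
    finally show "(v i x - v (i - 1) x) / (cbar / real n) \<le> Kc" .
  qed
qed

end
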